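(* For every positive integer $m$ such that the shell $(\mathbb{Z}^2)_m=\{x\in\mathbb{Z}^2 : (x,x)=m\}$ is nonempty, the shell $(\mathbb{Z}^2)_m$ is not a spherical $4$-design.
   Context: $(x,y)$ denotes the standard Euclidean inner product on $\mathbb{R}^2$. A finite nonempty set $X\subset S^{n-1}=\{x\in\mathbb{R}^n: x_1^2+\cdots+x_n^2=1\}$ is a spherical $t$-design if $\frac{1}{|X|}\sum_{x\in X}f(x)=\frac{1}{|S^{n-1}|}\int_{S^{n-1}}f(x)\,d\sigma(x)$ for all polynomials $f$ of degree at most $t$; a finite nonempty subset $X$ of the sphere $S^{n-1}(r)$ of radius $r$ is a spherical $t$-design if $\frac{1}{r}X$ is one. (For $n=2$, identifying $\mathbb{R}^2$ with $\mathbb{C}$, a finite set $\{\xi_1,\dots,\xi_N\}$ on the unit circle is a spherical $t$-design iff $\sum_i \xi_i^k=0$ for all $k=1,\dots,t$.) *)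

theory Defs
  imports "HOL-Analysis.Analysis"
begin

definition poly2 :: "nat \<Rightarrow> (nat \<Rightarrow> nat \<Rightarrow> real) \<Rightarrow> real \<times> real \<Rightarrow> real" where
  "poly2 t c p = (\<Sum>i\<le>t. \<Sum>j\<le>t - i. c i j * fst p ^ i * snd p ^ j)"

text \<open>Spherical t-design on the unit circle S^1: the normalized surface measure
on S^1 (of total length 2 pi) is parametrized by the angle.\<close>

definition sph_design_S1 :: "nat \<Rightarrow> (real \<times> real) set \<Rightarrow> bool" where
  "sph_design_S1 t X \<longleftrightarrow> finite X \<and> X \<noteq> {} \<and>
     (\<forall>x\<in>X. (fst x)\<^sup>2 + (snd x)\<^sup>2 = 1) \<and>
     (\<forall>c. (\<Sum>x\<in>X. poly2 t c x) / real (card X)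
          = integral {0..2*pi} (\<lambda>\<theta>. poly2 t c (cos \<theta>, sin \<theta>)) / (2*pi))"

definition sph_design_radius :: "nat \<Rightarrow> real \<Rightarrow> (real \<times> real) set \<Rightarrow> bool" where
  "sph_design_radius t r X \<longleftrightarrow> r > 0 \<and> (\<forall>x\<in>X. (fst x)\<^sup>2 + (snd x)\<^sup>2 = r\<^sup>2) \<and>
     sph_design_S1 t ((\<lambda>x. (fst x / r, snd x / r)) ` X)"

definition shell :: "nat \<Rightarrow> (real \<times> real) set" where
  "shell m = (\<lambda>(a, b). (real_of_int a, real_of_int b)) `
               {p :: int \<times> int. (fst p)\<^sup>2 + (snd p)\<^sup>2 = int m}"

end

theory Submission
  imports Defs "HOL-Computational_Algebra.Primes"
begin

definition gi :: "complex \<Rightarrow> bool" where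
  "gi z \<longleftrightarrow> (\<exists>c d::int. z = Complex (of_int c) (of_int d))"

definition nrm :: "complex \<Rightarrow> real" where
  "nrm z = (Re z)^2 + (Im z)^2"

lemma giE: assumes "gi z" obtains c d :: int where "z = Complex (of_int c) (of_int d)"
  using assms unfolding gi_def by blast

lemma gi_mult: assumes "gi z" "gi w" shows "gi (z*w)"
proof -
  obtain c d where z: "z = Complex (of_int c) (of_int d)" using assms(1) by (rule giE)
  obtain e f where w: "w = Complex (of_int e) (of_int f)" using assms(2) by (rule giE)
  show ?thesis unfolding gi_def z w
    by (rule exI[of _ "c*e - d*f"], rule exI[of _ "c*f + d*e"]) (simp add: complex_eq_iff)
qed

lemma gi_add: assumes "gi z" "gi w" shows "gi (z+w)"
proof -
  obtain c d where z: "z = Complex (of_int c) (of_int d)" using assms(1) by (rule giE)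
  obtain e f where w: "w = Complex (of_int e) (of_int f)" using assms(2) by (rule giE)
  show ?thesis unfolding gi_def z w
    by (rule exI[of _ "c+e"], rule exI[of _ "d+f"]) (simp add: complex_eq_iff)
qed

lemma gi_one: "gi 1" unfolding gi_def by (rule exI[of _ 1], rule exI[of _ 0]) (simp add: complex_eq_iff)

lemma gi_power: "gi z \<Longrightarrow> gi (z^n)"
  by (induction n) (auto simp: gi_one gi_mult)

lemma gi_cnj: "gi z \<Longrightarrow> gi (cnj z)"
  unfolding gi_def
  apply (elim exE)
  subgoal for c d
    by (rule exI[of _ "c"], rule exI[of _ "-d"]) (simp add: complex_eq_iff)
  done

lemma gi_of_int: "gi (of_int k)"
  unfolding gi_def by (rule exI[of _ k], rule exI[of _ 0]) (simp add: complex_eq_iff)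

lemma gi_Complex[simp]: "gi (Complex (of_int c) (of_int d))"
  unfolding gi_def by blast

lemma nrm_mult: "nrm (z*w) = nrm z * nrm w"
  unfolding nrm_def by (simp add: power2_eq_square algebra_simps)

lemma nrm_power: "nrm (z^n) = nrm z ^ n"
proof (induction n)
  case (Suc n) thus ?case using nrm_mult[of z "z^n"] by simp
qed (simp add: nrm_def)

lemma nrm_cnj: "nrm (cnj z) = nrm z" unfolding nrm_def by simp

lemma nrm_Complex[simp]: "nrm (Complex a b) = a^2 + b^2" unfolding nrm_def by simp

lemma nrm_eq0: "nrm z = 0 \<longleftrightarrow> z = 0"
  unfolding nrm_def by (simp add: complex_eq_iff) 

definition G :: "nat \<Rightarrow> complex set" where
  "G m = {z. gi z \<and> nrm z = real m}"

lemma G_finite: "finite (G m)"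
proof -
  have "G m \<subseteq> (\<lambda>(c,d). Complex (of_int c) (of_int d)) ` ({-int m..int m} \<times> {-int m..int m})"
  proof
    fix z assume "z \<in> G m"
    then obtain c d :: int where z: "z = Complex c d" and n: "real_of_int c ^2 + real_of_int d^2 = real m"
      unfolding G_def by (auto elim!: giE)
    hence "real_of_int (c^2 + d^2) = real_of_int (int m)" by simp
    hence n': "c^2 + d^2 = int m" by (simp only: of_int_eq_iff)
    have sq: "\<bar>x\<bar> \<le> x^2" for x :: int
    proof (cases "x = 0")
      case False
      hence "\<bar>x\<bar> * 1 \<le> \<bar>x\<bar> * \<bar>x\<bar>" by (intro mult_left_mono) auto
      thus ?thesis by (simp add: power2_eq_square abs_mult_self_eq)
    qed simp
    have "\<bar>c\<bar> \<le> int m" "\<bar>d\<bar> \<le> int m" using sq[of c] sq[of d] n' zero_le_power2[of c] zero_le_power2[of d] by linarith+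
    hence "c \<in> {-int m..int m}" "d \<in> {-int m..int m}" by auto
    thus "z \<in> (\<lambda>(c,d). Complex (of_int c) (of_int d)) ` ({-int m..int m} \<times> {-int m..int m})"
      using z by auto
  qed
  thus ?thesis by (rule finite_subset) (intro finite_imageI finite_cartesian_product finite_atLeastAtMost_int)
qed

definition T :: "nat \<Rightarrow> complex" where
  "T m = (\<Sum>z\<in>G m. z^4)"

lemma thue:
  fixes p :: nat and a b :: int
  assumes p: "prime p" and nb: "\<not> int p dvd b" and d: "int p dvd a^2 + b^2"
  shows "\<exists>u v::int. u^2 + v^2 = int p"
proof -
  define k where "k = (LEAST k::nat. p < (k+1)^2)"
  have ex: "p < (p+1)^2" by (simp add: power2_eq_square)
  have pi: "prime (int p)" using p by simp
  have k1: "p < (k+1)^2" unfolding k_def by (rule LeastI[of _ p], rule ex)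
  have k2: "k^2 \<le> p"
  proof (cases k)
    case 0 thus ?thesis by simp
  next
    case (Suc j)
    have "\<not> p < (j+1)^2" using Least_le[of "\<lambda>k. p < (k+1)^2" j] Suc unfolding k_def[symmetric] by auto
    thus ?thesis using Suc by simp
  qed
  have k3: "k^2 \<noteq> p"
  proof
    assume "k^2 = p"
    hence "prime (k*k)" using p by (simp add: power2_eq_square)
    hence "k = 1" using prime_product by blast
    thus False using \<open>k^2 = p\<close> p by (metis one_power2 not_prime_1)
  qed
  hence k4: "int k^2 < int p" using k2 by (metis le_neq_implies_less of_nat_less_iff of_nat_power)
  define S where "S = {0..int k} \<times> {0..int k}"
  define f where "f = (\<lambda>(x,y). (b*x - a*y) mod int p)"
  have "\<not> inj_on f S"
  proof
    assume inj: "inj_on f S"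
    have "f ` S \<subseteq> {0..<int p}" unfolding f_def using p prime_gt_0_nat by auto
    hence "card (f ` S) \<le> card {0..<int p}" by (intro card_mono) auto
    also have "\<dots> = p" by simp
    finally have "card S \<le> p" using card_image[OF inj] by simp
    moreover have "card S = (k+1)^2" unfolding S_def by (simp add: card_cartesian_product power2_eq_square nat_add_distrib)
    ultimately show False using k1 by simp
  qed
  then obtain x1 y1 x2 y2 where s: "(x1,y1) \<in> S" "(x2,y2) \<in> S" "(x1,y1) \<noteq> (x2,y2)"
     and fe: "f (x1,y1) = f (x2,y2)"
    unfolding inj_on_def by auto
  define X where "X = x1 - x2"
  define Y where "Y = y1 - y2"
  have "int p dvd (b*x1 - a*y1) - (b*x2 - a*y2)" using fe unfolding f_def
    by (simp add: mod_eq_dvd_iff)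
  hence dv: "int p dvd b*X - a*Y" unfolding X_def Y_def by (simp add: algebra_simps)
  have eq: "b^2 * (X^2+Y^2) = (b*X - a*Y)*(b*X + a*Y) + Y^2*(a^2+b^2)"
    by (simp add: power2_eq_square algebra_simps)
  have "int p dvd b^2 * (X^2+Y^2)" unfolding eq using dv d by simp
  moreover have "\<not> int p dvd b^2" using nb pi prime_dvd_power by blast
  ultimately have dXY: "int p dvd X^2+Y^2" using pi prime_dvd_mult_iff by blast
  have bx: "\<bar>X\<bar> \<le> int k" "\<bar>Y\<bar> \<le> int k" using s(1,2) unfolding S_def X_def Y_def by auto
  have "X^2 \<le> int k^2" "Y^2 \<le> int k^2" using bx by (metis abs_le_square_iff abs_of_nat)+
  hence lt: "X^2+Y^2 < 2 * int p" using k4 by linarith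
  have pos: "X^2+Y^2 > 0" using s(3) unfolding X_def Y_def
    by (auto simp: sum_power2_gt_zero_iff)
  obtain t where t: "X^2+Y^2 = int p * t" using dXY by blast
  have pp: "int p > 0" using p prime_gt_0_nat by simp
  have "t > 0" using pos t pp by (simp add: zero_less_mult_iff)
  moreover have "int p * t < int p * 2" using lt t by (simp add: mult.commute)
  hence "t < 2" using pp by simp
  ultimately have "t = 1" by simp
  thus ?thesis using t by auto
qed

lemma Complex_mult_int: "Complex (of_int a) (of_int b) * Complex (of_int c) (of_int d)
   = Complex (of_int (a * c - b * d)) (of_int (a * d + b * c))"
  by (simp add: complex_eq_iff)

lemma Complex_int_eq[simp]: "Complex (of_int a) (of_int b) = Complex (of_int c) (of_int d) \<longleftrightarrow> a = c \<and> b = d"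
  by simp

lemma lin_aux1:
  fixes P a b u r s t :: int
  assumes s: "a * u + b * r = P * s" and t: "b * u - a * r = P * t" and uv: "u^2 + r^2 = P"
  shows "P * (u * s - r * t) = P * a" "P * (u * t + r * s) = P * b"
proof -
  have "P * (u * s - r * t) = u * (P * s) - r * (P * t)" by (simp add: algebra_simps)
  also have "\<dots> = u * (a * u + b * r) - r * (b * u - a * r)" unfolding s t ..
  also have "\<dots> = a * (u^2 + r^2)" by (simp add: algebra_simps power2_eq_square)
  finally show "P * (u * s - r * t) = P * a" unfolding uv by (simp add: mult.commute)
  have "P * (u * t + r * s) = u * (P * t) + r * (P * s)" by (simp add: algebra_simps)
  also have "\<dots> = u * (b * u - a * r) + r * (a * u + b * r)" unfolding s t ..
  also have "\<dots> = b * (u^2 + r^2)" by (simp add: algebra_simps power2_eq_square)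
  finally show "P * (u * t + r * s) = P * b" unfolding uv by (simp add: mult.commute)
qed

lemma lin_aux2:
  fixes P a b u r s t :: int
  assumes s: "a * u - b * r = P * s" and t: "b * u + a * r = P * t" and uv: "u^2 + r^2 = P"
  shows "P * (u * s + r * t) = P * a" "P * (u * t - r * s) = P * b"
proof -
  have "P * (u * s + r * t) = u * (P * s) + r * (P * t)" by (simp add: algebra_simps)
  also have "\<dots> = u * (a * u - b * r) + r * (b * u + a * r)" unfolding s t ..
  also have "\<dots> = a * (u^2 + r^2)" by (simp add: algebra_simps power2_eq_square)
  finally show "P * (u * s + r * t) = P * a" unfolding uv by (simp add: mult.commute)
  have "P * (u * t - r * s) = u * (P * t) - r * (P * s)" by (simp add: algebra_simps)
  also have "\<dots> = u * (b * u + a * r) - r * (a * u - b * r)" unfolding s t ..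
  also have "\<dots> = b * (u^2 + r^2)" by (simp add: algebra_simps power2_eq_square)
  finally show "P * (u * t - r * s) = P * b" unfolding uv by (simp add: mult.commute)
qed

lemma split_pi:
  fixes p :: nat and u r a b :: int
  assumes p: "prime p" and uv: "u^2 + r^2 = int p" and d: "int p dvd a^2 + b^2"
  shows "(\<exists>y. gi y \<and> Complex (of_int a) (of_int b) = Complex (of_int u) (of_int r) * y) \<or>
         (\<exists>y. gi y \<and> Complex (of_int a) (of_int b) = Complex (of_int u) (- of_int r) * y)"
proof -
  have pi: "prime (int p)" using p by simp
  have e1: "(a * u+b * r) * (a * u-b * r) = a^2 * (u^2+r^2) - r^2 * (a^2+b^2)" by (simp add: power2_eq_square algebra_simps)
  have "int p dvd (a * u+b * r) * (a * u-b * r)" unfolding e1 using d uv by simp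
  hence "int p dvd a * u+b * r \<or> int p dvd a * u-b * r" using pi prime_dvd_mult_iff by blast
  have sq: "(int p)^2 dvd (a^2+b^2) * (u^2+r^2)" using d uv by (simp add: power2_eq_square)
  have e2: "(a * u+b * r)^2 + (b * u-a * r)^2 = (a^2+b^2) * (u^2+r^2)" by (simp add: power2_eq_square algebra_simps)
  have e3: "(a * u-b * r)^2 + (b * u+a * r)^2 = (a^2+b^2) * (u^2+r^2)" by (simp add: power2_eq_square algebra_simps)
  have pos: "int p > 0" using p prime_gt_0_nat by simp
  { assume h: "int p dvd a * u+b * r"
    hence "(int p)^2 dvd (a * u+b * r)^2" by simp
    hence "(int p)^2 dvd (b * u-a * r)^2" using sq e2 by (metis dvd_add_right_iff)
    hence "int p dvd (b * u-a * r)^2" by (metis dvd_mult_left power2_eq_square) 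
    hence h2: "int p dvd b * u-a * r" using pi prime_dvd_power by blast
    obtain s where s: "a * u+b * r = int p * s" using h by blast
    obtain t where t: "b * u-a * r = int p * t" using h2 by blast
    have "Complex (of_int u) (of_int r) * Complex (of_int s) (of_int t) = Complex (of_int (u * s - r * t)) (of_int (u * t + r * s))" by (simp add: complex_eq_iff)
    have e1: "u * s - r * t = a" and e2: "u * t + r * s = b" using lin_aux1[OF s t uv] pos by simp_all
    have "Complex (of_int a) (of_int b) = Complex (of_int u) (of_int r) * Complex (of_int s) (of_int t)"
      unfolding e1[symmetric] e2[symmetric] by (simp add: complex_eq_iff)
    hence ?thesis by (intro disjI1 exI[of _ "Complex (of_int s) (of_int t)"]) simp
  }
  moreover
  { assume h: "int p dvd a * u-b * r"
    hence "(int p)^2 dvd (a * u-b * r)^2" by simp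
    hence "(int p)^2 dvd (b * u+a * r)^2" using sq e3 by (metis dvd_add_right_iff)
    hence "int p dvd (b * u+a * r)^2" by (metis dvd_mult_left power2_eq_square) 
    hence h2: "int p dvd b * u+a * r" using pi prime_dvd_power by blast
    obtain s where s: "a * u-b * r = int p * s" using h by blast
    obtain t where t: "b * u+a * r = int p * t" using h2 by blast
    have "Complex (of_int u) (- of_int r) * Complex (of_int s) (of_int t) = Complex (of_int (u * s + r * t)) (of_int (u * t - r * s))" by (simp add: complex_eq_iff)
    have e1: "u * s + r * t = a" and e2: "u * t - r * s = b" using lin_aux2[OF s t uv] pos by simp_all
    have "Complex (of_int a) (of_int b) = Complex (of_int u) (- of_int r) * Complex (of_int s) (of_int t)"
      unfolding e1[symmetric] e2[symmetric] by (simp add: complex_eq_iff)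
    hence ?thesis by (intro disjI2 exI[of _ "Complex (of_int s) (of_int t)"]) simp
  }
  ultimately show ?thesis using \<open>int p dvd a * u+b * r \<or> int p dvd a * u-b * r\<close> by blast
qed

lemma prime_not_sq: assumes "prime p" shows "int p \<noteq> u^2"
proof
  assume h: "int p = u^2"
  hence "p = nat \<bar>u\<bar> * nat \<bar>u\<bar>"
    by (metis abs_mult_self_eq nat_int nat_mult_distrib abs_ge_zero power2_eq_square)
  hence "nat \<bar>u\<bar> = 1" using assms prime_product by metis
  thus False using \<open>p = nat \<bar>u\<bar> * nat \<bar>u\<bar>\<close> assms by simp
qed

lemma two_sq_ndvd:
  assumes p: "prime p" and uv: "u^2 + r^2 = int p"
  shows "\<not> int p dvd r"
proof
  assume "int p dvd r"
  then obtain k where k: "r = int p * k" by blast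
  have p2: "int p \<ge> 2" using p prime_ge_2_nat by simp
  have "r^2 \<le> int p" using uv zero_le_power2[of u] by linarith
  hence "(int p)^2 * k^2 \<le> int p" using k by (simp add: power_mult_distrib)
  hence "k = 0"
  proof (rule contrapos_pp)
    assume "k \<noteq> 0"
    hence "k^2 \<ge> 1" by (simp add: int_one_le_iff_zero_less)
    hence "(int p)^2 * 1 \<le> (int p)^2 * k^2" by (intro mult_left_mono) auto
    moreover have "(int p)^2 > int p" using p2 by (simp add: power2_eq_square)
    ultimately show "\<not> (int p)^2 * k^2 \<le> int p" by linarith
  qed
  hence "u^2 = int p" using uv k by simp
  thus False using prime_not_sq[OF p] by metis
qed

definition pz :: "nat \<Rightarrow> int \<Rightarrow> int \<Rightarrow> complex \<Rightarrow> bool" where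
  "pz p u r z \<longleftrightarrow> (\<exists>c d. z = Complex (of_int c) (of_int d) \<and> int p dvd c * r - d * u)"

lemma pz_Complex: "pz p u r (Complex (of_int c) (of_int d)) \<longleftrightarrow> int p dvd c * r - d * u"
  unfolding pz_def by auto

lemma pz_Complex_real: "a = of_int c \<Longrightarrow> b = of_int d \<Longrightarrow> pz p u r (Complex a b) \<longleftrightarrow> int p dvd c * r - d * u"
  using pz_Complex by simp

locale gp =
  fixes p :: nat and u r :: int
  assumes p: "prime p" and uv: "u^2 + r^2 = int p"
begin

lemma pi: "prime (int p)" using p by simp
lemma nr: "\<not> int p dvd r" using two_sq_ndvd[OF p uv] .
lemma nu: "\<not> int p dvd u" using two_sq_ndvd[OF p, of r u] uv by (simp add: add.commute)

lemma pz_mult: assumes "gi x" "gi y" shows "pz p u r (x * y) \<longleftrightarrow> pz p u r x \<or> pz p u r y"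
proof -
  obtain c d where x: "x = Complex (of_int c) (of_int d)" using assms(1) by (rule giE)
  obtain e f where y: "y = Complex (of_int e) (of_int f)" using assms(2) by (rule giE)
  define X where "X = c * r - d * u"
  define Y where "Y = e * r - f * u"
  define Z where "Z = (c * e - d * f) * r - (c * f + d * e) * u"
  have eq: "Z * r = X * Y - d * f * int p" unfolding X_def Y_def Z_def using uv[symmetric]
    by (simp add: algebra_simps power2_eq_square)
  have xy: "x * y = Complex (of_int (c * e - d * f)) (of_int (c * f + d * e))"
    unfolding x y by (simp add: complex_eq_iff)
  have px: "pz p u r x \<longleftrightarrow> int p dvd X" unfolding x X_def by (rule pz_Complex)
  have py: "pz p u r y \<longleftrightarrow> int p dvd Y" unfolding y Y_def by (rule pz_Complex)
  have pxy: "pz p u r (x * y) \<longleftrightarrow> int p dvd Z" unfolding xy Z_def by (rule pz_Complex)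
  have e2: "X * Y - d * f * int p = X * Y + (- (d * f)) * int p" by simp
  have "int p dvd Z \<longleftrightarrow> int p dvd Z * r" using pi nr prime_dvd_mult_iff by blast
  also have "\<dots> \<longleftrightarrow> int p dvd X * Y" unfolding eq e2 by (rule dvd_add_times_triv_right_iff)
  also have "\<dots> \<longleftrightarrow> int p dvd X \<or> int p dvd Y" using pi prime_dvd_mult_iff by blast
  finally show ?thesis unfolding pxy px py .
qed

lemma pz_add: assumes "gi x" "gi y" "pz p u r y" shows "pz p u r (x + y) \<longleftrightarrow> pz p u r x"
proof -
  obtain c d where x: "x = Complex (of_int c) (of_int d)" using assms(1) by (rule giE)
  obtain e f where y: "y = Complex (of_int e) (of_int f)" using assms(2) by (rule giE)
  have xy: "x + y = Complex (of_int (c + e)) (of_int (d + f))" unfolding x y by (simp add: complex_eq_iff)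
  have px: "pz p u r x \<longleftrightarrow> int p dvd c * r - d * u" unfolding x by (rule pz_Complex)
  have py: "int p dvd e * r - f * u" using assms(3) unfolding y pz_Complex .
  have pxy: "pz p u r (x + y) \<longleftrightarrow> int p dvd (c + e) * r - (d + f) * u" unfolding xy by (rule pz_Complex)
  have "(c + e) * r - (d + f) * u = (c * r - d * u) + (e * r - f * u)" by (simp add: algebra_simps)
  thus ?thesis unfolding pxy px using py by (simp add: dvd_add_left_iff)
qed

lemma pz_power: assumes "gi x" shows "pz p u r (x ^ n) \<longleftrightarrow> n > 0 \<and> pz p u r x"
proof (induction n)
  case 0
  have "\<not> pz p u r (Complex 1 0)" using nr pz_Complex_real[of 1 1 0 0 p u r] by simp
  thus ?case by (simp add: one_complex.code)
next
  case (Suc n) thus ?case using pz_mult[OF assms gi_power[OF assms, of n]] by auto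
qed

lemma pz_zero: "pz p u r 0"
proof -
  have "pz p u r (Complex 0 0)" using pz_Complex_real[of 0 0 0 0 p u r] by simp
  thus ?thesis by (simp add: zero_complex.code)
qed

lemma gi_zero: "gi 0" using gi_of_int[of 0] by simp

lemma gi_sum: "(\<And>z. z \<in> A \<Longrightarrow> gi (f z)) \<Longrightarrow> gi (sum f A)"
  by (induction A rule: infinite_finite_induct) (auto simp: gi_zero gi_add)

lemma pz_sum: assumes "finite A" "\<And>z. z \<in> A \<Longrightarrow> gi (f z) \<and> pz p u r (f z)" shows "pz p u r (sum f A)"
  using assms
proof (induction A rule: finite_induct)
  case empty thus ?case by (simp add: pz_zero)
next
  case (insert a A)
  have "gi (sum f A)" using insert by (intro gi_sum) auto
  thus ?case using insert pz_add[of "sum f A" "f a"] by (simp add: add.commute)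
qed

lemma pz_pi: "pz p u r (Complex (of_int u) (of_int r))" unfolding pz_Complex by simp

lemma not_pz_cpi: assumes "p \<noteq> 2" shows "\<not> pz p u r (Complex (of_int u) (- of_int r))"
proof -
  have "Complex (of_int u) (- of_int r) = Complex (of_int u) (of_int (-r))" by simp
  moreover have "\<not> int p dvd u * r - (-r) * u"
  proof
    assume "int p dvd u * r - (-r) * u"
    hence "int p dvd 2 * (u * r)" by (simp add: algebra_simps)
    hence "int p dvd 2 \<or> int p dvd u * r" using pi prime_dvd_mult_iff by blast
    moreover have "\<not> int p dvd 2"
    proof
      assume "int p dvd 2" hence "p dvd 2" by presburger
      hence "p = 2 \<or> p = 1" using dvd_refl by (metis dvd_antisym nat_dvd_not_less one_less_numeral_iff semiring_norm(76) zero_less_numeral prime_nat_iff two_is_prime_nat assms)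
      thus False using assms p by auto
    qed
    ultimately show False using nu nr pi prime_dvd_mult_iff by blast
  qed
  ultimately show ?thesis using pz_Complex_real[of "of_int u" u "- of_int r" "-r" p u r] by simp
qed

lemma not_pz_w: assumes "gi w" "\<not> int p dvd c^2 + d^2" "w = Complex (of_int c) (of_int d)"
  shows "\<not> pz p u r w"
proof
  assume "pz p u r w"
  hence h: "int p dvd c * r - d * u" using assms(3) pz_Complex by simp
  have "r^2 * (c^2 + d^2) = (c * r - d * u) * (c * r + d * u) + d^2 * (u^2 + r^2)"
    by (simp add: algebra_simps power2_eq_square)
  hence "int p dvd r^2 * (c^2 + d^2)" using h uv by simp
  hence "int p dvd r^2 \<or> int p dvd c^2 + d^2" using pi prime_dvd_mult_iff by blast
  thus False using assms(2) nr pi prime_dvd_power by blast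
qed

end

lemma G_iff: "z \<in> G m \<longleftrightarrow> (\<exists>c d. z = Complex (of_int c) (of_int d) \<and> c^2 + d^2 = int m)"
proof
  assume "z \<in> G m"
  then obtain c d where z: "z = Complex (of_int c) (of_int d)" and "nrm z = real m" unfolding G_def by (auto elim: giE)
  hence "real_of_int (c^2 + d^2) = real_of_int (int m)" by simp
  hence "c^2 + d^2 = int m" by (simp only: of_int_eq_iff)
  thus "\<exists>c d. z = Complex (of_int c) (of_int d) \<and> c^2 + d^2 = int m" using z by blast
next
  assume "\<exists>c d. z = Complex (of_int c) (of_int d) \<and> c^2 + d^2 = int m"
  then obtain c d where z: "z = Complex (of_int c) (of_int d)" and e: "c^2 + d^2 = int m" by blast
  have "real_of_int (c^2 + d^2) = real_of_int (int m)" using e by simp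
  thus "z \<in> G m" unfolding G_def using z by simp
qed

lemma T_reindex:
  assumes "a \<noteq> 0" and "G m = (\<lambda>w. a * w) ` G n"
  shows "T m = a^4 * T n"
proof -
  have inj: "inj_on (\<lambda>w. a * w) (G n)" using assms(1) by (auto intro: inj_onI)
  have "T m = (\<Sum>w\<in>G n. (a * w)^4)" unfolding T_def assms(2) by (simp add: sum.reindex[OF inj])
  also have "\<dots> = a^4 * T n" unfolding T_def by (simp add: sum_distrib_left power_mult_distrib)
  finally show ?thesis .
qed

lemma T_one: "T 1 = 4"
proof -
  have "G 1 = {1, -1, \<i>, -\<i>}"
  proof
    show "G 1 \<subseteq> {1, -1, \<i>, -\<i>}"
    proof
      fix z assume "z \<in> G 1"
      then obtain c d where z: "z = Complex (of_int c) (of_int d)" and e: "c^2 + d^2 = 1"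
        unfolding G_iff by auto
      have "c^2 \<le> 1" "d^2 \<le> 1" using e zero_le_power2[of c] zero_le_power2[of d] by linarith+
      hence "\<bar>c\<bar> \<le> 1" "\<bar>d\<bar> \<le> 1" by (simp_all add: abs_square_le_1)
      hence "c \<in> {-1,0,1}" "d \<in> {-1,0,1}" by auto
      thus "z \<in> {1, -1, \<i>, -\<i>}" using e z by (auto simp: complex_eq_iff)
    qed
  next
    have "1 \<in> G 1" "-1 \<in> G 1" "\<i> \<in> G 1" "-\<i> \<in> G 1" unfolding G_def
      by (auto simp: nrm_def gi_def complex_eq_iff intro!: exI[of _ 0] exI[of _ 1] exI[of _ "-1"])
    thus "{1, -1, \<i>, -\<i>} \<subseteq> G 1" by auto
  qed
  moreover have "\<i> \<noteq> (1::complex)" "\<i> \<noteq> (-1::complex)" "-\<i> \<noteq> (1::complex)" "-\<i> \<noteq> (-1::complex)"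
    "(1::complex) \<noteq> -1" "\<i> \<noteq> -\<i>" by (auto simp: complex_eq_iff)
  ultimately show ?thesis unfolding T_def by simp
qed

lemma G_two:
  assumes "2 dvd m"
  shows "G m = (\<lambda>w. (1 + \<i>) * w) ` G (m div 2)"
proof
  show "G m \<subseteq> (\<lambda>w. (1 + \<i>) * w) ` G (m div 2)"
  proof
    fix z assume "z \<in> G m"
    then obtain c d where z: "z = Complex (of_int c) (of_int d)" and e: "c^2 + d^2 = int m"
      unfolding G_iff by auto
    have "even (c^2 + d^2)" using e assms by simp
    hence "even (c + d)" by (auto simp: power2_eq_square)
    then obtain s where s: "c + d = 2 * s" by blast
    define t where "t = s - c"
    have dd: "d - c = 2 * t" using s unfolding t_def by simp
    have "(c^2 + d^2) = 2 * (s^2 + t^2)"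
    proof -
      have "2 * (c^2 + d^2) = (c + d)^2 + (d - c)^2" by (simp add: power2_eq_square algebra_simps)
      also have "\<dots> = 4 * (s^2 + t^2)" unfolding s dd by (simp add: power2_eq_square algebra_simps)
      finally show ?thesis by simp
    qed
    hence "s^2 + t^2 = int (m div 2)" using e assms by auto
    hence "Complex (of_int s) (of_int t) \<in> G (m div 2)" unfolding G_iff by blast
    moreover have "z = (1 + \<i>) * Complex (of_int s) (of_int t)"
      unfolding z using s dd unfolding t_def by (simp add: complex_eq_iff)
    ultimately show "z \<in> (\<lambda>w. (1 + \<i>) * w) ` G (m div 2)" by blast
  qed
next
  show "(\<lambda>w. (1 + \<i>) * w) ` G (m div 2) \<subseteq> G m"
  proof
    fix z assume "z \<in> (\<lambda>w. (1 + \<i>) * w) ` G (m div 2)"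
    then obtain w where w: "w \<in> G (m div 2)" and z: "z = (1 + \<i>) * w" by blast
    then obtain c d where wc: "w = Complex (of_int c) (of_int d)" and e: "c^2 + d^2 = int (m div 2)"
      unfolding G_iff by auto
    have "z = Complex (of_int (c - d)) (of_int (c + d))" unfolding z wc by (simp add: complex_eq_iff)
    moreover have "(c - d)^2 + (c + d)^2 = int m"
    proof -
      have "(c - d)^2 + (c + d)^2 = 2 * (c^2 + d^2)" by (simp add: power2_eq_square algebra_simps)
      thus ?thesis using e assms by auto
    qed
    ultimately show "z \<in> G m" unfolding G_iff by blast
  qed
qed

lemma G_caseA:
  fixes p m :: nat
  assumes p: "p > 0" and ne: "G m \<noteq> {}"
    and all: "\<And>c d. Complex (of_int c) (of_int d) \<in> G m \<Longrightarrow> int p dvd c \<and> int p dvd d"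
  shows "p^2 dvd m \<and> G m = (\<lambda>w. of_nat p * w) ` G (m div p^2)"
proof -
  have key: "\<exists>w\<in>G (m div p^2). z = of_nat p * w" and dv: "p^2 dvd m" if zm: "z \<in> G m" for z
  proof -
    obtain c d where z: "z = Complex (of_int c) (of_int d)" and e: "c^2 + d^2 = int m"
      using zm[unfolded G_iff] by blast
    obtain s where s: "c = int p * s" using all zm z by blast
    obtain t where t: "d = int p * t" using all zm z by blast
    have e2: "int m = (int p)^2 * (s^2 + t^2)" using e s t by (simp add: power2_eq_square algebra_simps)
    hence "int (p^2) dvd int m" by simp
    thus "p^2 dvd m" by (simp only: of_nat_dvd_iff)
    hence "int (m div p^2) = int m div (int p)^2" by (simp add: zdiv_int)
    also have "\<dots> = s^2 + t^2" unfolding e2 using p by simp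
    finally have "Complex (of_int s) (of_int t) \<in> G (m div p^2)" unfolding G_iff by auto
    moreover have "z = of_nat p * Complex (of_int s) (of_int t)" unfolding z s t by (simp add: complex_eq_iff)
    ultimately show "\<exists>w\<in>G (m div p^2). z = of_nat p * w" by blast
  qed
  obtain z0 where "z0 \<in> G m" using ne by blast
  hence d: "p^2 dvd m" using dv by blast
  have "(\<lambda>w. of_nat p * w) ` G (m div p^2) \<subseteq> G m"
  proof
    fix z assume "z \<in> (\<lambda>w. of_nat p * w) ` G (m div p^2)"
    then obtain w where w: "w \<in> G (m div p^2)" and z: "z = of_nat p * w" by blast
    then obtain c d where wc: "w = Complex (of_int c) (of_int d)" and e: "c^2 + d^2 = int (m div p^2)"
      unfolding G_iff by auto
    have "z = Complex (of_int (int p * c)) (of_int (int p * d))" unfolding z wc by (simp add: complex_eq_iff)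
    moreover have "(int p * c)^2 + (int p * d)^2 = int m"
    proof -
      have "(int p * c)^2 + (int p * d)^2 = int (p^2) * int (m div p^2)" unfolding e[symmetric]
        by (simp add: power2_eq_square algebra_simps)
      also have "\<dots> = int m" using d by (simp del: of_nat_power add: of_nat_mult[symmetric])
      finally show ?thesis .
    qed
    ultimately show "z \<in> G m" unfolding G_iff by blast
  qed
  thus ?thesis using key d by blast
qed

context gp begin

definition "pg = Complex (of_int u) (of_int r)"
definition "qg = Complex (of_int u) (- of_int r)"

lemma gi_pg: "gi pg" unfolding pg_def by simp
lemma gi_qg: "gi qg" unfolding qg_def using gi_Complex[of u "-r"] by simp
lemma nrm_pg: "nrm pg = real p"
proof -
  have "real_of_int (u^2 + r^2) = real_of_int (int p)" using uv by (simp only:)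
  thus ?thesis unfolding pg_def by simp
qed
lemma nrm_qg: "nrm qg = real p" unfolding qg_def using nrm_pg unfolding pg_def by simp
lemma p0: "p > 0" using p prime_gt_0_nat by blast
lemma pg0: "pg \<noteq> 0"
proof
  assume "pg = 0" hence "nrm pg = 0" using nrm_eq0 by simp
  thus False using nrm_pg p0 by simp
qed
lemma qg0: "qg \<noteq> 0"
proof
  assume "qg = 0" hence "nrm qg = 0" using nrm_eq0 by simp
  thus False using nrm_qg p0 by simp
qed

lemma G_nrm_div:
  assumes "gi y" "z = a * y" "z \<in> G (p * k)" "nrm a = real p"
  shows "y \<in> G k"
proof -
  have "nrm z = real (p * k)" using assms(3) unfolding G_def by simp
  moreover have "nrm z = nrm a * nrm y" using assms(2) nrm_mult by simp
  ultimately have "real p * nrm y = real p * real k" using assms(4) by simp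
  hence "nrm y = real k" using p0 by simp
  thus ?thesis unfolding G_def using assms(1) by simp
qed

lemma surj: "z \<in> G (p^k * n) \<Longrightarrow> \<exists>s\<le>k. \<exists>w\<in>G n. z = pg^s * qg^(k-s) * w"
proof (induction k arbitrary: z)
  case 0 thus ?case by (intro exI[of _ 0]) auto
next
  case (Suc k)
  obtain a b where z: "z = Complex (of_int a) (of_int b)" and e: "a^2 + b^2 = int (p^Suc k * n)"
    using Suc.prems unfolding G_iff by auto
  have "int p dvd a^2 + b^2" unfolding e by simp
  from split_pi[OF p uv this]
  have "(\<exists>y. gi y \<and> z = pg * y) \<or> (\<exists>y. gi y \<and> z = qg * y)" unfolding z pg_def qg_def .
  moreover have mz: "z \<in> G (p * (p^k * n))" using Suc.prems by (simp add: mult.assoc)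
  ultimately show ?case
  proof (elim disjE exE conjE)
    fix y assume y: "gi y" "z = pg * y"
    hence "y \<in> G (p^k * n)" using G_nrm_div[OF y(1) y(2) mz nrm_pg] by simp
    then obtain s w where s: "s \<le> k" "w \<in> G n" "y = pg^s * qg^(k-s) * w" using Suc.IH by blast
    have "z = pg^(Suc s) * qg^(Suc k - Suc s) * w" using s y by (simp add: algebra_simps)
    thus ?thesis using s by (intro exI[of _ "Suc s"]) auto
  next
    fix y assume y: "gi y" "z = qg * y"
    hence "y \<in> G (p^k * n)" using G_nrm_div[OF y(1) y(2) mz nrm_qg] by simp
    then obtain s w where s: "s \<le> k" "w \<in> G n" "y = pg^s * qg^(k-s) * w" using Suc.IH by blast
    have "Suc k - s = Suc (k - s)" using s by simp
    hence "z = pg^s * qg^(Suc k - s) * w" using s y by (simp add: algebra_simps)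
    thus ?thesis using s by (intro exI[of _ s]) auto
  qed
qed

lemma into: assumes "s \<le> k" "w \<in> G n" shows "pg^s * qg^(k-s) * w \<in> G (p^k * n)"
proof -
  have "gi w" "nrm w = real n" using assms(2) unfolding G_def by auto
  hence "gi (pg^s * qg^(k-s) * w)" by (intro gi_mult gi_power gi_pg gi_qg)
  moreover have "nrm (pg^s * qg^(k-s) * w) = real p ^ s * real p ^ (k - s) * real n"
    using \<open>nrm w = real n\<close> by (simp add: nrm_mult nrm_power nrm_pg nrm_qg)
  moreover have "real p ^ s * real p ^ (k - s) = real p ^ k" using assms(1)
    by (simp add: power_add[symmetric])
  ultimately show ?thesis unfolding G_def by simp
qed

lemma not_pz_G: assumes "w \<in> G n" "\<not> p dvd n" shows "\<not> pz p u r w"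
proof -
  obtain c d where w: "w = Complex (of_int c) (of_int d)" and e: "c^2 + d^2 = int n"
    using assms(1) unfolding G_iff by auto
  have "\<not> int p dvd c^2 + d^2" using assms(2) e by simp
  thus ?thesis using not_pz_w w by simp
qed

lemma pz_pg: "pz p u r pg" unfolding pg_def pz_Complex by simp

lemma inj: assumes "p \<noteq> 2" "\<not> p dvd n"
  shows "inj_on (\<lambda>(s,w). pg^s * qg^(k-s) * w) ({0..k} \<times> G n)"
proof -
  have neq: "False" if "s < s'" "s' \<le> k" "w \<in> G n" "w' \<in> G n"
       "pg^s * qg^(k-s) * w = pg^s' * qg^(k-s') * w'" for s s' w w'
  proof -
    define j where "j = s' - s"
    have j: "j > 0" "s' = s + j" "k - s = (k - s') + j" using that unfolding j_def by auto
    have "(pg^s * qg^(k-s')) * (qg^j * w) = (pg^s * qg^(k-s')) * (pg^j * w')"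
      using that(5) unfolding j(2,3) by (simp add: power_add algebra_simps)
    hence eq: "qg^j * w = pg^j * w'" using pg0 qg0 by simp
    have giw: "gi w" "gi w'" using that(3,4) unfolding G_def by auto
    have "pz p u r (pg^j * w')" using pz_mult[OF gi_power[OF gi_pg] giw(2)] pz_power[OF gi_pg] pz_pg j(1) by auto
    moreover have "\<not> pz p u r (qg^j * w)"
      using pz_mult[OF gi_power[OF gi_qg] giw(1)] pz_power[OF gi_qg] not_pz_cpi[OF assms(1)]
        not_pz_G[OF that(3) assms(2)] unfolding qg_def by auto
    ultimately show False using eq by simp
  qed
  show ?thesis
  proof (rule inj_onI)
    fix x y assume hx: "x \<in> {0..k} \<times> G n" and hy: "y \<in> {0..k} \<times> G n"
      and h: "(\<lambda>(s,w). pg^s * qg^(k-s) * w) x = (\<lambda>(s,w). pg^s * qg^(k-s) * w) y"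
    obtain s w where x: "x = (s,w)" by (cases x)
    obtain s' w' where y: "y = (s',w')" by (cases y)
    have h3: "pg^s * qg^(k-s) * w = pg^s' * qg^(k-s') * w'" using h x y by simp
    have hs: "s \<le> k" "s' \<le> k" "w \<in> G n" "w' \<in> G n" using hx hy x y by auto
    have "s = s'" using neq[of s s' w w'] neq[of s' s w' w] hs h3 by (metis linorder_neqE_nat)
    hence "w = w'" using h3 pg0 qg0 by simp
    thus "x = y" using x y \<open>s = s'\<close> by simp
  qed
qed

lemma F_nz: assumes "p \<noteq> 2" shows "(\<Sum>s\<in>{0..k}. (pg^s * qg^(k-s))^4) \<noteq> 0"
proof
  assume h: "(\<Sum>s\<in>{0..k}. (pg^s * qg^(k-s))^4) = 0"
  have gi_t: "gi ((pg^s * qg^(k-s))^4)" for s by (intro gi_power gi_mult gi_pg gi_qg)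
  have "{0..k} = insert 0 {1..k}" by auto
  hence "(\<Sum>s\<in>{0..k}. (pg^s * qg^(k-s))^4) = qg^(4*k) + (\<Sum>s\<in>{1..k}. (pg^s * qg^(k-s))^4)"
    by (simp add: power_mult[symmetric] mult.commute)
  hence z: "qg^(4*k) + (\<Sum>s\<in>{1..k}. (pg^s * qg^(k-s))^4) = 0" using h by simp
  have pzs: "pz p u r (\<Sum>s\<in>{1..k}. (pg^s * qg^(k-s))^4)"
  proof (rule pz_sum)
    fix s assume s: "s \<in> {1..k}"
    have "pz p u r (pg^s * qg^(k-s))"
      using pz_mult[OF gi_power[OF gi_pg] gi_power[OF gi_qg]] pz_power[OF gi_pg] pz_pg s by auto
    thus "gi ((pg^s * qg^(k-s))^4) \<and> pz p u r ((pg^s * qg^(k-s))^4)"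
      using gi_t pz_power[OF gi_mult[OF gi_power[OF gi_pg] gi_power[OF gi_qg]]] by auto
  qed simp
  have giS: "gi (\<Sum>s\<in>{1..k}. (pg^s * qg^(k-s))^4)" by (intro gi_sum gi_t)
  have "pz p u r (qg^(4*k) + (\<Sum>s\<in>{1..k}. (pg^s * qg^(k-s))^4)) \<longleftrightarrow> pz p u r (qg^(4*k))"
    by (rule pz_add[OF gi_power[OF gi_qg] giS pzs])
  hence "pz p u r (qg^(4*k))" unfolding z using pz_zero by simp
  hence "pz p u r qg" using pz_power[OF gi_qg] by simp
  thus False using not_pz_cpi[OF assms] unfolding qg_def by simp
qed

lemma T_decomp: assumes "p \<noteq> 2" "\<not> p dvd n"
  shows "T (p^k * n) = (\<Sum>s\<in>{0..k}. (pg^s * qg^(k-s))^4) * T n"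
    and "G (p^k * n) = (\<lambda>(s,w). pg^s * qg^(k-s) * w) ` ({0..k} \<times> G n)"
proof -
  show im: "G (p^k * n) = (\<lambda>(s,w). pg^s * qg^(k-s) * w) ` ({0..k} \<times> G n)"
  proof
    show "G (p^k * n) \<subseteq> (\<lambda>(s,w). pg^s * qg^(k-s) * w) ` ({0..k} \<times> G n)"
      using surj by fastforce
    show "(\<lambda>(s,w). pg^s * qg^(k-s) * w) ` ({0..k} \<times> G n) \<subseteq> G (p^k * n)"
      using into by auto
  qed
  have "T (p^k * n) = (\<Sum>x\<in>{0..k} \<times> G n. (case x of (s,w) \<Rightarrow> pg^s * qg^(k-s) * w)^4)"
    unfolding T_def im by (subst sum.reindex[OF inj[OF assms]]) (simp add: o_def)
  also have "\<dots> = (\<Sum>(s,w)\<in>{0..k} \<times> G n. (pg^s * qg^(k-s))^4 * w^4)"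
    by (rule sum.cong) (auto simp: power_mult_distrib split: prod.splits)
  also have "\<dots> = (\<Sum>s\<in>{0..k}. \<Sum>w\<in>G n. (pg^s * qg^(k-s))^4 * w^4)"
    by (rule sum.cartesian_product[symmetric])
  also have "\<dots> = (\<Sum>s\<in>{0..k}. (pg^s * qg^(k-s))^4 * T n)"
    by (rule sum.cong[OF refl]) (simp add: T_def sum_distrib_left)
  also have "\<dots> = (\<Sum>s\<in>{0..k}. (pg^s * qg^(k-s))^4) * T n"
    by (rule sum_distrib_right[symmetric])
  finally show "T (p^k * n) = (\<Sum>s\<in>{0..k}. (pg^s * qg^(k-s))^4) * T n" .
qed

end

lemma T_nz: "m > 0 \<Longrightarrow> G m \<noteq> {} \<Longrightarrow> T m \<noteq> 0"
proof (induction m rule: less_induct)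
  case (less m)
  show ?case
  proof (cases "m = 1")
    case True thus ?thesis using T_one by simp
  next
    case False
    then obtain p where pp: "prime p" "p dvd m" using prime_factor_nat by blast
    have p1: "p > 1" using pp(1) prime_gt_1_nat by blast
    show ?thesis
    proof (cases "p = 2")
      case True
      have "2 dvd m" using pp True by simp
      hence im: "G m = (\<lambda>w. (1 + \<i>) * w) ` G (m div 2)" by (rule G_two)
      have "m div 2 < m" using less.prems by simp
      moreover have "m div 2 > 0" using less.prems \<open>2 dvd m\<close> by (auto elim!: dvdE)
      moreover have "G (m div 2) \<noteq> {}" using im less.prems(2) by (metis image_empty)
      ultimately have "T (m div 2) \<noteq> 0" using less.IH by blast
      moreover have "(1 + \<i>) \<noteq> 0" by (simp add: complex_eq_iff)
      ultimately show ?thesis using T_reindex[OF _ im] by simp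
    next
      case p2: False
      show ?thesis
      proof (cases "\<forall>c d. Complex (of_int c) (of_int d) \<in> G m \<longrightarrow> int p dvd c \<and> int p dvd d")
        case True
        have p0: "p > 0" using p1 by simp
        have A: "p^2 dvd m \<and> G m = (\<lambda>w. of_nat p * w) ` G (m div p^2)"
          by (rule G_caseA[OF p0 less.prems(2)]) (use True in blast)
        have "p^2 > 1" using p1 by (simp add: power2_eq_square one_less_mult)
        hence "m div p^2 < m" using less.prems(1) by (intro div_less_dividend) auto
        moreover have "m div p^2 > 0"
        proof -
          obtain q where q: "m = p^2 * q" using A by (auto elim!: dvdE)
          hence "q > 0" using less.prems(1) by (cases "q = 0") auto
          thus ?thesis using q p0 by simp
        qed
        moreover have "G (m div p^2) \<noteq> {}" using A less.prems(2) by (metis image_empty)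
        ultimately have "T (m div p^2) \<noteq> 0" using less.IH by blast
        moreover have "(of_nat p :: complex) \<noteq> 0" using p1 by simp
        ultimately show ?thesis using T_reindex[of "of_nat p" m "m div p^2"] A by simp
      next
        case False
        then obtain a b where ab: "Complex (of_int a) (of_int b) \<in> G m" and nd: "\<not> (int p dvd a \<and> int p dvd b)"
          by blast
        have e: "a^2 + b^2 = int m" using ab unfolding G_iff by auto
        have pi: "prime (int p)" using pp(1) by simp
        have dm: "int p dvd a^2 + b^2" using e pp(2) by simp
        have nb: "\<not> int p dvd b"
        proof
          assume "int p dvd b"
          hence "int p dvd b^2" by (metis dvd_mult2 power2_eq_square)
          hence "int p dvd a^2" using dm by (simp add: dvd_add_left_iff)
          hence "int p dvd a" using pi prime_dvd_power by blast
          thus False using nd \<open>int p dvd b\<close> by blast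
        qed
        obtain u r where uv: "u^2 + r^2 = int p" using thue[OF pp(1) nb dm] by blast
        interpret gp p u r by (rule gp.intro[OF pp(1) uv])
        obtain n where n: "m = p ^ multiplicity p m * n" "\<not> p dvd n"
          by (rule multiplicity_decompose'[of m p]) (use less.prems(1) p1 in auto)
        define k where "k = multiplicity p m"
        have k0: "k > 0" unfolding k_def using multiplicity_gt_zero_iff[of m p] less.prems pp(2) p1 by auto
        have mk: "m = p^k * n" using n unfolding k_def by simp
        have dec: "T m = (\<Sum>s\<in>{0..k}. (pg^s * qg^(k-s))^4) * T n"
          "G m = (\<lambda>(s,w). pg^s * qg^(k-s) * w) ` ({0..k} \<times> G n)"
          unfolding mk by (rule T_decomp[OF p2 n(2)])+
        have "G n \<noteq> {}" using dec(2) less.prems(2) by (metis image_empty Sigma_empty2)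
        moreover have "n > 0" using mk less.prems(1) by (cases "n = 0") auto
        moreover have "n < m"
        proof -
          have "p^k > 1" using p1 k0 by (metis one_less_power)
          hence "1 * n < p^k * n" using \<open>n > 0\<close> by (intro mult_strict_right_mono) auto
          thus ?thesis using mk by simp
        qed
        ultimately have "T n \<noteq> 0" using less.IH by blast
        thus ?thesis using dec(1) F_nz[OF p2, of k] by simp
      qed
    qed
  qed
qed

lemma poly2_4: "poly2 4 c (x, y) =
   c 0 0 + c 0 1 * y + c 0 2 * y^2 + c 0 3 * y^3 + c 0 4 * y^4
 + c 1 0 * x + c 1 1 * x * y + c 1 2 * x * y^2 + c 1 3 * x * y^3
 + c 2 0 * x^2 + c 2 1 * x^2 * y + c 2 2 * x^2 * y^2
 + c 3 0 * x^3 + c 3 1 * x^3 * y + c 4 0 * x^4"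
  unfolding poly2_def by (simp add: eval_nat_numeral atMost_Suc algebra_simps)

definition c1 :: "nat \<Rightarrow> nat \<Rightarrow> real" where
  "c1 i j = (if (i,j) = (4,0) \<or> (i,j) = (0,4) then 1 else if (i,j) = (2,2) then -6 else 0)"
definition c2 :: "nat \<Rightarrow> nat \<Rightarrow> real" where
  "c2 i j = (if (i,j) = (3,1) then 4 else if (i,j) = (1,3) then -4 else 0)"

lemma Complex_pow4: "(Complex x y)^4 = Complex (x^4 - 6 * x^2 * y^2 + y^4) (4 * x^3 * y - 4 * x * y^3)"
  by (simp add: complex_eq_iff eval_nat_numeral algebra_simps)

lemma poly_c1: "poly2 4 c1 (x, y) = Re ((Complex x y)^4)"
  unfolding poly2_4 Complex_pow4 by (simp add: c1_def)

lemma poly_c2: "poly2 4 c2 (x, y) = Im ((Complex x y)^4)"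
  unfolding poly2_4 Complex_pow4 by (simp add: c2_def)

lemma sq_cs: "(Complex (cos x) (sin x))^2 = Complex (cos (2 * x)) (sin (2 * x))"
  by (simp add: complex_eq_iff power2_eq_square cos_double sin_double)

lemma cis_pow4: "(Complex (cos t) (sin t))^4 = Complex (cos (4 * t)) (sin (4 * t))"
proof -
  have "(Complex (cos t) (sin t))^4 = ((Complex (cos t) (sin t))^2)^2" by (simp flip: power_mult)
  also have "\<dots> = Complex (cos (2 * (2 * t))) (sin (2 * (2 * t)))" unfolding sq_cs ..
  finally show ?thesis by simp
qed

lemma int_cos4: "integral {0..2*pi} (\<lambda>t. cos (4 * t)) = 0"
proof -
  have "((\<lambda>t. cos (4 * t)) has_integral (sin (4 * (2*pi)) / 4 - sin (4 * 0) / 4)) {0..2*pi}"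
  proof (rule fundamental_theorem_of_calculus)
    fix x :: real assume "x \<in> {0..2*pi}"
    have "((\<lambda>t. sin (4 * t) / 4) has_real_derivative cos (4 * x)) (at x within {0..2*pi})"
      by (auto intro!: derivative_eq_intros)
    thus "((\<lambda>t. sin (4 * t) / 4) has_vector_derivative cos (4 * x)) (at x within {0..2*pi})"
      by (simp add: has_real_derivative_iff_has_vector_derivative)
  qed simp
  moreover have "sin (4 * (2*pi)) = 0" using sin_npi[of 8] by (simp add: mult.commute)
  ultimately show ?thesis by (simp add: integral_unique)
qed

lemma int_sin4: "integral {0..2*pi} (\<lambda>t. sin (4 * t)) = 0"
proof -
  have "((\<lambda>t. sin (4 * t)) has_integral ((- cos (4 * (2*pi)) / 4) - (- cos (4 * 0) / 4))) {0..2*pi}"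
  proof (rule fundamental_theorem_of_calculus)
    fix x :: real assume "x \<in> {0..2*pi}"
    have "((\<lambda>t. - cos (4 * t) / 4) has_real_derivative sin (4 * x)) (at x within {0..2*pi})"
      by (auto intro!: derivative_eq_intros)
    thus "((\<lambda>t. - cos (4 * t) / 4) has_vector_derivative sin (4 * x)) (at x within {0..2*pi})"
      by (simp add: has_real_derivative_iff_has_vector_derivative)
  qed simp
  moreover have "cos (4 * (2*pi)) = 1" using cos_npi_int[of 8] by (simp add: mult.commute)
  ultimately show ?thesis by (simp add: integral_unique)
qed

lemma G_shell: "G m = (\<lambda>x. Complex (fst x) (snd x)) ` shell m"
  by (rule set_eqI) (auto simp: G_iff shell_def image_iff)

lemma sum_scaled:
  fixes q :: "complex \<Rightarrow> real" and R :: real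
  assumes R: "R > 0"
    and qdiv: "\<And>z. q (z / complex_of_real (R^4)) = q z / R^4"
    and qsum: "\<And>A. q (\<Sum>z\<in>A. z^4) = (\<Sum>z\<in>A. q (z^4))"
  shows "(\<Sum>x\<in>(\<lambda>x. (fst x / R, snd x / R)) ` shell m. q ((Complex (fst x) (snd x))^4)) = q (T m) / R^4"
proof -
  have inj1: "inj_on (\<lambda>x. (fst x / R, snd x / R)) (shell m)"
    using R by (auto intro!: inj_onI simp: prod_eq_iff)
  have inj2: "inj_on (\<lambda>x. Complex (fst x) (snd x)) (shell m)"
    by (auto intro!: inj_onI simp: prod_eq_iff)
  have sc: "(Complex (a / R) (b / R))^4 = (Complex a b)^4 / complex_of_real (R^4)" for a b
  proof -
    have "Complex (a / R) (b / R) = Complex a b / complex_of_real R" by (simp add: complex_eq_iff)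
    thus ?thesis by (simp add: power_divide)
  qed
  have "(\<Sum>x\<in>(\<lambda>x. (fst x / R, snd x / R)) ` shell m. q ((Complex (fst x) (snd x))^4))
      = (\<Sum>x\<in>shell m. q ((Complex (fst x / R) (snd x / R))^4))"
    by (simp add: sum.reindex[OF inj1])
  also have "\<dots> = (\<Sum>x\<in>shell m. q ((Complex (fst x) (snd x))^4) / R^4)"
    by (simp add: sc qdiv del: of_real_power)
  also have "\<dots> = (\<Sum>z\<in>G m. q (z^4)) / R^4"
    unfolding G_shell by (simp add: sum.reindex[OF inj2] sum_divide_distrib)
  also have "\<dots> = q (T m) / R^4" unfolding T_def using qsum[of "G m"] by simp
  finally show ?thesis .
qed

theorem theorem1p1:
  fixes m :: nat
  assumes "m > 0" and "shell m \<noteq> {}"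
  shows "\<not> sph_design_radius 4 (sqrt (real m)) (shell m)"
proof
  assume des: "sph_design_radius 4 (sqrt (real m)) (shell m)"
  define R where "R = sqrt (real m)"
  define X where "X = (\<lambda>x. (fst x / R, snd x / R)) ` shell m"
  have R: "R > 0" unfolding R_def using assms(1) by simp
  have S1: "sph_design_S1 4 X" using des unfolding sph_design_radius_def X_def R_def by simp
  hence fin: "finite X" and ne: "X \<noteq> {}" unfolding sph_design_S1_def by auto
  hence cX: "real (card X) \<noteq> 0" by simp
  have eq: "(\<Sum>x\<in>X. poly2 4 c x) / real (card X) = integral {0..2*pi} (\<lambda>t. poly2 4 c (cos t, sin t)) / (2*pi)" for c
    using S1 unfolding sph_design_S1_def by blast
  have "(\<Sum>x\<in>X. poly2 4 c1 x) = (\<Sum>x\<in>X. Re ((Complex (fst x) (snd x))^4))"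
    by (rule sum.cong) (auto simp: poly_c1[symmetric])
  also have "\<dots> = Re (T m) / R^4" unfolding X_def
    by (rule sum_scaled[OF R]) (simp_all add: Re_divide_of_real Re_sum)
  finally have s1: "(\<Sum>x\<in>X. poly2 4 c1 x) = Re (T m) / R^4" .
  have "(\<Sum>x\<in>X. poly2 4 c2 x) = (\<Sum>x\<in>X. Im ((Complex (fst x) (snd x))^4))"
    by (rule sum.cong) (auto simp: poly_c2[symmetric])
  also have "\<dots> = Im (T m) / R^4" unfolding X_def
    by (rule sum_scaled[OF R]) (simp_all add: Im_divide_of_real Im_sum)
  finally have s2: "(\<Sum>x\<in>X. poly2 4 c2 x) = Im (T m) / R^4" .
  have i1: "integral {0..2*pi} (\<lambda>t. poly2 4 c1 (cos t, sin t)) = 0"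
    unfolding poly_c1 cis_pow4 using int_cos4 by simp
  have i2: "integral {0..2*pi} (\<lambda>t. poly2 4 c2 (cos t, sin t)) = 0"
    unfolding poly_c2 cis_pow4 using int_sin4 by simp
  have "Re (T m) / R^4 = 0" using eq[of c1] s1 i1 cX by simp
  hence re: "Re (T m) = 0" using R by simp
  have "Im (T m) / R^4 = 0" using eq[of c2] s2 i2 cX by simp
  hence im: "Im (T m) = 0" using R by simp
  have "T m = 0" using re im by (simp add: complex_eq_iff)
  moreover have "G m \<noteq> {}" using assms(2) unfolding G_shell by simp
  ultimately show False using T_nz[OF assms(1)] by simp
qed

end
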